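(* Let $n=p_1^{\alpha_1}p_2^{\alpha_2}\cdots p_r^{\alpha_r}$, where $r\geq 2$, $\alpha_1,\ldots,\alpha_r$ are positive integers and $p_1<p_2<\cdots<p_r$ are primes. For every $i\in\{1,2,\ldots,r-1\}$, in $\mathcal{P}(C_n)$, $$\deg(p_i^{\alpha_i})-\deg(p_r^{\alpha_r})>p_i^{\alpha_i-1}\left[(p_r-1)\,\phi\!\left(\frac{n}{p_i^{\alpha_i}p_r^{\alpha_r}}\right)-\frac{n}{p_i^{\alpha_i-1}p_r^{\alpha_r}}\right].$$
   Context: For a finite group $G$, the power graph $\mathcal{P}(G)$ is the simple undirected graph with vertex set $G$ in which two distinct vertices are adjacent if one is an integral power of the other. $C_n$ denotes the cyclic group of order $n$, identified with $\mathbb{Z}_n=\{0,1,\ldots,n-1\}$, so a positive divisor $d<n$ of $n$ is regarded as the element $d\in\mathbb{Z}_n$. $\deg(a)$ is the degree of vertex $a$ in $\mathcal{P}(C_n)$ and $\phi$ is Euler's totient function. *)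

theory Defs
  imports "HOL-Number_Theory.Number_Theory"
begin

text \<open>Power graph of the cyclic group C_n, identified with Z_n = {0,...,n-1} (additive).
  The k-th integral power of b is k*b mod n; since b has finite order, nonnegative k suffice.\<close>
definition pcn_adj :: "nat \<Rightarrow> nat \<Rightarrow> nat \<Rightarrow> bool" where
  "pcn_adj n a b \<longleftrightarrow> a < n \<and> b < n \<and> a \<noteq> b \<and>
     ((\<exists>k::nat. a = (k * b) mod n) \<or> (\<exists>k::nat. b = (k * a) mod n))"

definition pcn_deg :: "nat \<Rightarrow> nat \<Rightarrow> nat" where
  "pcn_deg n a = card {b. pcn_adj n a b}"

end

theory Submission
  imports Defs
begin

lemma mult_mod_iff:
  fixes n x y :: nat
  assumes "n > 0" "x < n"
  shows "(\<exists>k. x = (k*y) mod n) \<longleftrightarrow> gcd y n dvd x"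
proof
  assume "\<exists>k. x = (k*y) mod n"
  then obtain k where k: "x = (k*y) mod n" by blast
  have "gcd y n dvd k*y" by simp
  moreover have "gcd y n dvd n" by simp
  ultimately have "gcd y n dvd (k*y) mod n"
    using dvd_mod by blast
  then show "gcd y n dvd x" using k by simp
next
  assume d: "gcd y n dvd x"
  show "\<exists>k. x = (k*y) mod n"
  proof (cases "y = 0")
    case True
    then have nx: "n dvd x" using d by simp
    have "x = 0"
    proof (rule ccontr)
      assume "x \<noteq> 0"
      then show False using nat_dvd_not_less[of x n] nx assms by simp
    qed
    then show ?thesis by (intro exI[of _ 0]) simp
  next
    case False
    obtain u v where uv: "y*u = n*v + gcd y n" using bezout_nat[OF False] by blast
    obtain c where c: "x = gcd y n * c" using d by blast
    have "(c*u)*y = n*(c*v) + x" using uv c by (simp add: algebra_simps)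
    then have "((c*u)*y) mod n = x" using assms by simp
    then show ?thesis by metis
  qed
qed

lemma coprime_shift: "coprime (c + k*m) (m::nat) \<longleftrightarrow> coprime c m"
proof -
  have "gcd (c + k*m) m = gcd m (k*m + c)" by (metis gcd.commute add.commute)
  also have "\<dots> = gcd m c" by (rule gcd_add_mult)
  finally show ?thesis by (metis coprime_iff_gcd_eq_1 gcd.commute)
qed

lemma card_coprime_lt:
  fixes m :: nat assumes "m \<ge> 2"
  shows "card {b. b < m \<and> coprime b m} = totient m"
proof -
  have "{b. b < m \<and> coprime b m} = totatives m"
  proof (intro Set.set_eqI iffI)
    fix b assume b: "b \<in> {b. b < m \<and> coprime b m}"
    have "b \<noteq> 0" using b assms by (cases "b = 0") auto
    then show "b \<in> totatives m" using b by (auto simp: totatives_def)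
  next
    fix b assume b: "b \<in> totatives m"
    have "b \<noteq> m" using b assms by (auto simp: totatives_def)
    then show "b \<in> {b. b < m \<and> coprime b m}" using b by (auto simp: totatives_def)
  qed
  then show ?thesis by (simp add: totient_def)
qed

lemma card_coprime_mult:
  fixes m k :: nat assumes "m \<ge> 2"
  shows "card {b. b < k*m \<and> coprime b m} = k * totient m"
proof (induction k)
  case 0 then show ?case by simp
next
  case (Suc k)
  have eq: "{b. b < Suc k*m \<and> coprime b m} = {b. b < k*m \<and> coprime b m} \<union> (\<lambda>c. c + k*m) ` {c. c < m \<and> coprime c m}"
  proof (intro Set.set_eqI iffI)
    fix b assume b: "b \<in> {b. b < Suc k*m \<and> coprime b m}"
    show "b \<in> {b. b < k*m \<and> coprime b m} \<union> (\<lambda>c. c + k*m) ` {c. c < m \<and> coprime c m}"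
    proof (cases "b < k*m")
      case True then show ?thesis using b by auto
    next
      case False
      then have "b = (b - k*m) + k*m" "b - k*m < m" using b by auto
      then show ?thesis using b coprime_shift[of "b - k*m" k m]
        by (metis (mono_tags, lifting) UnI2 image_eqI mem_Collect_eq)
    qed
  next
    fix b assume "b \<in> {b. b < k*m \<and> coprime b m} \<union> (\<lambda>c. c + k*m) ` {c. c < m \<and> coprime c m}"
    then show "b \<in> {b. b < Suc k*m \<and> coprime b m}" using coprime_shift by auto
  qed
  have "card ((\<lambda>c. c + k*m) ` {c. c < m \<and> coprime c m}) = totient m"
    by (subst card_image) (auto simp: inj_on_def card_coprime_lt[OF assms])
  moreover have "{b. b < k*m \<and> coprime b m} \<inter> (\<lambda>c. c + k*m) ` {c. c < m \<and> coprime c m} = {}" by auto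
  ultimately show ?case using Suc eq by (simp add: card_Un_disjoint)
qed

lemma gcd_dvd_iff_coprime:
  fixes A m b :: nat assumes "coprime A m"
  shows "gcd b (A*m) dvd A \<longleftrightarrow> coprime b m"
proof
  assume h: "gcd b (A*m) dvd A"
  have "gcd b m dvd gcd b (A*m)"
  proof (rule gcd_greatest)
    show "gcd b m dvd b" by (rule gcd_dvd1)
    have "m dvd A*m" by simp
    then show "gcd b m dvd A*m" by (rule dvd_trans[OF gcd_dvd2])
  qed
  then have "gcd b m dvd A" using h by (rule dvd_trans)
  moreover have "gcd b m dvd m" by (rule gcd_dvd2)
  ultimately have "gcd b m dvd gcd A m" by (rule gcd_greatest)
  moreover have "gcd A m = 1" using assms by (metis coprime_iff_gcd_eq_1)
  ultimately have "gcd b m dvd 1" by simp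
  then have "gcd b m = 1" by simp
  then show "coprime b m" by (metis coprime_iff_gcd_eq_1)
next
  assume cb: "coprime b m"
  have "coprime (gcd b (A*m)) m" by (rule coprime_divisors[OF gcd_dvd1 dvd_refl cb])
  moreover have "gcd b (A*m) dvd A*m" by (rule gcd_dvd2)
  ultimately show "gcd b (A*m) dvd A" by (metis coprime_dvd_mult_left_iff)
qed

lemma deg_formula:
  fixes n A m :: nat
  assumes "n = A*m" "coprime A m" "A > 0" "m \<ge> 2"
  shows "real (pcn_deg n A) = real m + (real A - 1) * real (totient m) - 1"
proof -
  have n0: "n > 0" and An: "A < n" using assms by auto
  define S1 where "S1 = {b. b < n \<and> A dvd b}"
  define S2 where "S2 = {b. b < n \<and> coprime b m}"
  have adj: "{b. pcn_adj n A b} = (S1 \<union> S2) - {A}"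
  proof (intro Set.set_eqI)
    fix b
    show "b \<in> {b. pcn_adj n A b} \<longleftrightarrow> b \<in> (S1 \<union> S2) - {A}"
    proof (cases "b < n")
      case True
      have e1: "(\<exists>k. A = (k*b) mod n) \<longleftrightarrow> coprime b m"
        using mult_mod_iff[OF n0 An, of b] gcd_dvd_iff_coprime[OF assms(2), of b] assms(1) by simp
      have e2: "(\<exists>k. b = (k*A) mod n) \<longleftrightarrow> A dvd b"
        using mult_mod_iff[OF n0 True, of A] assms(1) by simp
      show ?thesis using True An e1 e2 unfolding pcn_adj_def S1_def S2_def by auto
    next
      case False
      then show ?thesis unfolding pcn_adj_def S1_def S2_def by auto
    qed
  qed
  have fin: "finite S1" "finite S2" unfolding S1_def S2_def by auto
  have c1: "card S1 = m"
  proof -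
    have "S1 = (\<lambda>c. A*c) ` {..<m}"
    proof (intro Set.set_eqI iffI)
      fix b assume "b \<in> S1"
      then obtain c where "b = A*c" "b < n" unfolding S1_def by auto
      then show "b \<in> (\<lambda>c. A*c) ` {..<m}" using assms by auto
    next
      fix b assume "b \<in> (\<lambda>c. A*c) ` {..<m}"
      then show "b \<in> S1" using assms unfolding S1_def by auto
    qed
    then show ?thesis using assms by (simp add: card_image inj_on_def)
  qed
  have c2: "card S2 = A * totient m"
    unfolding S2_def assms(1) using card_coprime_mult[OF assms(4)] by simp
  have c3: "card (S1 \<inter> S2) = totient m"
  proof -
    have "S1 \<inter> S2 = (\<lambda>c. A*c) ` {c. c < m \<and> coprime c m}"
    proof (intro Set.set_eqI iffI)
      fix b assume hb: "b \<in> S1 \<inter> S2"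
      then have "A dvd b" "b < n" "coprime b m" unfolding S1_def S2_def by auto
      then obtain c where "b = A*c" "b < n" "coprime b m" by blast
      then show "b \<in> (\<lambda>c. A*c) ` {c. c < m \<and> coprime c m}" using assms by auto
    next
      fix b assume "b \<in> (\<lambda>c. A*c) ` {c. c < m \<and> coprime c m}"
      then show "b \<in> S1 \<inter> S2" using assms unfolding S1_def S2_def by auto
    qed
    then show ?thesis using assms card_coprime_lt[OF assms(4)] by (simp add: card_image inj_on_def)
  qed
  have "card (S1 \<union> S2) + card (S1 \<inter> S2) = card S1 + card S2"
    using card_Un_Int[OF fin] by simp
  moreover have "A \<in> S1 \<union> S2" using An unfolding S1_def by auto
  moreover have "card (S1 \<union> S2) > 0" using An fin unfolding S1_def by (auto simp: card_gt_0_iff)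
  ultimately have "card ((S1 \<union> S2) - {A}) + 1 + totient m = m + A * totient m"
    using c1 c2 c3 fin by (simp add: card_Diff_singleton)
  then have "real (card ((S1 \<union> S2) - {A})) + 1 + real (totient m) = real m + real A * real (totient m)"
    by (metis of_nat_add of_nat_mult of_nat_1)
  then show ?thesis unfolding pcn_deg_def adj by (simp add: algebra_simps)
qed

theorem lemma2p3:
  fixes n r :: nat and p \<alpha> :: "nat \<Rightarrow> nat"
  assumes "r \<ge> 2"
    and "\<And>j. j \<in> {1..r} \<Longrightarrow> prime (p j)"
    and "\<And>j. j \<in> {1..r} \<Longrightarrow> \<alpha> j \<ge> 1"
    and "strict_mono_on {1..r} p"
    and "n = (\<Prod>j=1..r. p j ^ \<alpha> j)"
    and "i \<in> {1..r-1}"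
  shows "real (pcn_deg n (p i ^ \<alpha> i)) - real (pcn_deg n (p r ^ \<alpha> r)) >
    real (p i ^ (\<alpha> i - 1)) *
      (real (p r - 1) * real (totient (n div (p i ^ \<alpha> i * p r ^ \<alpha> r)))
       - real (n div (p i ^ (\<alpha> i - 1) * p r ^ \<alpha> r)))"
proof -
  note prm = assms(2) and al = assms(3)
  have i1: "1 \<le> i" "i < r" using assms(1,6) by auto
  have iI: "i \<in> {1..r}" and rI: "r \<in> {1..r}" using i1 by auto
  have pir: "p i < p r" using strict_mono_onD[OF assms(4) iI rI i1(2)] .
  have neq: "p j \<noteq> p k" if "j \<in> {1..r}" "k \<in> {1..r}" "j \<noteq> k" for j k
  proof (cases "j < k")
    case True then show ?thesis using strict_mono_onD[OF assms(4) that(1,2)] by simp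
  next
    case False then have "k < j" using that by simp
    then show ?thesis using strict_mono_onD[OF assms(4) that(2,1)] by simp
  qed
  have cop: "coprime (p j ^ \<alpha> j) (p k ^ \<alpha> k)" if "j \<in> {1..r}" "k \<in> {1..r}" "j \<noteq> k" for j k
    using primes_coprime[OF prm[OF that(1)] prm[OF that(2)] neq[OF that]]
    by (simp add: coprime_power_left_iff coprime_power_right_iff)
  define J where "J = {1..r} - {i, r}"
  define A where "A = p i ^ \<alpha> i"
  define B where "B = p r ^ \<alpha> r"
  define t where "t = (\<Prod>j\<in>J. p j ^ \<alpha> j)"
  define a' where "a' = p i ^ (\<alpha> i - 1)"
  define b' where "b' = p r ^ (\<alpha> r - 1)"
  have JI: "J \<subseteq> {1..r}" unfolding J_def by auto
  have rng: "{1..r} = insert i (insert r J)" unfolding J_def using iI rI by auto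
  have Jf: "finite J" "i \<notin> J" "r \<notin> J" unfolding J_def by auto
  have nABt: "n = A * (B * t)"
  proof -
    have "n = (\<Prod>j\<in>insert i (insert r J). p j ^ \<alpha> j)" unfolding assms(5) rng[symmetric] ..
    also have "\<dots> = A * (B * t)" unfolding A_def B_def t_def using Jf i1 by (simp add: prod.insert)
    finally show ?thesis .
  qed
  have cAB: "coprime A B" unfolding A_def B_def using cop[OF iI rI] i1 by simp
  have cAt: "coprime A t" unfolding A_def t_def
    by (rule prod_coprime_right) (use cop[OF iI] JI J_def in auto)
  have cBt: "coprime B t" unfolding B_def t_def
    by (rule prod_coprime_right) (use cop[OF rI] JI J_def in auto)
  have pi2: "p i \<ge> 2" using prime_ge_2_nat[OF prm[OF iI]] .
  have pr2: "p r \<ge> 2" using prime_ge_2_nat[OF prm[OF rI]] .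
  have Aa: "A = a' * p i"
  proof -
    obtain k where k: "\<alpha> i = Suc k" using al[OF iI] by (cases "\<alpha> i") auto
    show ?thesis unfolding A_def a'_def k by simp
  qed
  have Bb: "B = b' * p r"
  proof -
    obtain k where k: "\<alpha> r = Suc k" using al[OF rI] by (cases "\<alpha> r") auto
    show ?thesis unfolding B_def b'_def k by simp
  qed
  have a1: "a' \<ge> 1" unfolding a'_def using pi2 by simp
  have b1: "b' \<ge> 1" unfolding b'_def using pr2 by simp
  have t0: "t > 0" unfolding t_def
    by (rule prod_pos) (use prm JI prime_gt_0_nat in auto)
  then have t1: "t \<ge> 1" by simp
  have "p i \<le> a' * p i" using a1 by simp
  then have A2: "A \<ge> 2" using Aa pi2 by linarith
  have "p r \<le> b' * p r" using b1 by simp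
  then have B2: "B \<ge> 2" using Bb pr2 by linarith
  have Bt: "B * t \<ge> 2" using B2 t1 by (metis le_trans mult_le_mono2 mult_1_right)
  have At: "A * t \<ge> 2" using A2 t1 by (metis le_trans mult_le_mono2 mult_1_right)
  have d1: "real (pcn_deg n A) = real (B*t) + (real A - 1) * real (totient (B*t)) - 1"
    by (rule deg_formula[OF nABt]) (use cAB cAt A2 Bt in auto)
  have d2: "real (pcn_deg n B) = real (A*t) + (real B - 1) * real (totient (A*t)) - 1"
    by (rule deg_formula) (use nABt cAB cBt B2 At in \<open>auto simp: algebra_simps ac_simps coprime_commute\<close>)
  have tB: "totient B = b' * (p r - 1)" unfolding B_def b'_def
    using totient_prime_power[OF prm[OF rI]] al[OF rI] by simp
  have tA: "totient A = a' * (p i - 1)" unfolding A_def a'_def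
    using totient_prime_power[OF prm[OF iI]] al[OF iI] by simp
  have tBt: "totient (B*t) = totient B * totient t" using totient_mult_coprime[OF cBt] .
  have tAt: "totient (A*t) = totient A * totient t" using totient_mult_coprime[OF cAt] .
  have q1: "n div (A * B) = t" using nABt A2 B2 by simp
  have q2: "n div (a' * B) = t * p i" using nABt Aa a1 B2 by simp
  have Ft: "totient t \<le> t" by (rule totient_le)
  have F1: "totient t \<ge> 1" using t1 by (simp add: Suc_le_eq)
  define P where "P = real (p i)"
  define Q where "Q = real (p r)"
  define a where "a = real a'"
  define b where "b = real b'"
  define T where "T = real t"
  define F where "F = real (totient t)"
  have rA: "real A = a * P" and rB: "real B = b * Q" unfolding a_def b_def P_def Q_def using Aa Bb by auto
  have rpi: "real (p i - 1) = P - 1" and rpr: "real (p r - 1) = Q - 1" unfolding P_def Q_def using pi2 pr2 by auto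
  have rtA: "real (totient A) = a * (P - 1)" by (simp only: tA of_nat_mult rpi a_def)
  have rtB: "real (totient B) = b * (Q - 1)" by (simp only: tB of_nat_mult rpr b_def)
  have e1: "real (pcn_deg n A) = T * b * Q + (a * P - 1) * (b * (Q - 1) * F) - 1"
    unfolding d1 tBt of_nat_mult rtB rA rB by (simp add: T_def F_def algebra_simps)
  have e2: "real (pcn_deg n B) = T * a * P + (b * Q - 1) * (a * (P - 1) * F) - 1"
    unfolding d2 tAt of_nat_mult rtA rA rB by (simp add: T_def F_def algebra_simps)
  have ident: "(T * b * Q + (a * P - 1) * (b * (Q - 1) * F) - 1) - (T * a * P + (b * Q - 1) * (a * (P - 1) * F) - 1)
      - a * ((Q - 1) * F - T * P) = (T - F) * b * Q + F * (a * (b - 1) * (Q - P) + b)"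
    by (simp add: algebra_simps)
  have TF: "T - F \<ge> 0" unfolding T_def F_def using Ft by simp
  have bQ: "b * Q \<ge> 0" unfolding b_def Q_def by simp
  have pos1: "(T - F) * b * Q \<ge> 0" using TF bQ by (simp add: mult.assoc)
  have QP: "Q - P \<ge> 0" unfolding Q_def P_def using pir by simp
  have ab: "a * (b - 1) * (Q - P) \<ge> 0" unfolding a_def b_def using a1 b1 QP by simp
  have bpos: "b > 0" unfolding b_def using b1 by simp
  have Fpos: "F > 0" unfolding F_def using t0 by simp
  have pos2: "F * (a * (b - 1) * (Q - P) + b) > 0" using ab bpos Fpos by simp
  have main: "(T * b * Q + (a * P - 1) * (b * (Q - 1) * F) - 1) - (T * a * P + (b * Q - 1) * (a * (P - 1) * F) - 1)
      > a * ((Q - 1) * F - T * P)" using ident pos1 pos2 by linarith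
  have rhs: "real (p i ^ (\<alpha> i - 1)) *
      (real (p r - 1) * real (totient (n div (p i ^ \<alpha> i * p r ^ \<alpha> r)))
       - real (n div (p i ^ (\<alpha> i - 1) * p r ^ \<alpha> r))) = a * ((Q - 1) * F - T * P)"
    using q1 q2 rpr unfolding A_def B_def a'_def a_def F_def T_def P_def by simp
  show ?thesis unfolding rhs using main e1 e2 unfolding A_def B_def by simp
qed

end
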